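(* Let $(C,\mathfrak p,\mathfrak d)$ be a regular $q$-cycle coalgebra with $\mathfrak p_{11}^1\ne0$. Then $\mathfrak d_{i+e,0}^i=\mathfrak p_{i+e,0}^i=0$ for all $i\ge0$ and $e>0$ with $i+e\le n-1$.
   Context: $K$ is an algebraically closed field of characteristic $0$ and $n\ge2$. $C$ is the coalgebra dual to $K[y]/\langle y^n\rangle$: basis $x_0,\dots,x_{n-1}$, $\Delta(x_i)=\sum_{j+k=i}x_j\otimes x_k$, $\epsilon(x_i)=\delta_{i0}$; $C\otimes C$ has the tensor product coalgebra structure; Sweedler notation $\Delta(b)=b_{(1)}\otimes b_{(2)}$. For linear maps $\mathfrak p,\mathfrak d\colon C\otimes C\to C$ write $a\cdot b=\mathfrak p(a\otimes b)$, $a:b=\mathfrak d(a\otimes b)$, $\mathfrak p(x_i\otimes x_j)=\sum_{k=0}^{n-1}\mathfrak p_{ij}^kx_k$, $\mathfrak d(x_i\otimes x_j)=\sum_{k=0}^{n-1}\mathfrak d_{ij}^kx_k$. A triple $(C,\mathfrak p,\mathfrak d)$ with $\mathfrak p,\mathfrak d$ coalgebra morphisms is a regular $q$-magma coalgebra if there are coalgebra morphisms $a\otimes b\mapsto a^b$, $a\otimes b\mapsto a_b$ from $C\otimes C$ to $C$ with $a^{b_{(1)}}\cdot b_{(2)}=(a\cdot b_{(1)})^{b_{(2)}}=\epsilon(b)a$ and $(a:b_{(2)})_{b_{(1)}}=a_{b_{(2)}}:b_{(1)}=\epsilon(b)a$. It is a regular $q$-cycle coalgebra if moreover for all $a,b,c$: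 (1) $(a\cdot b_{(1)})\cdot(c:b_{(2)})=(a\cdot c_{(2)})\cdot(b\cdot c_{(1)})$; (2) $(a\cdot b_{(1)}):(c\cdot b_{(2)})=(a:c_{(2)})\cdot(b:c_{(1)})$; (3) $(a:b_{(1)}):(c:b_{(2)})=(a:c_{(2)}):(b\cdot c_{(1)})$. *)

theory Defs
  imports "HOL-Computational_Algebra.Polynomial" "HOL-Library.Function_Algebras"
begin

text \<open>Coordinate model of the coalgebra C dual to K[y]/(y^n).
  An element of C is a coefficient vector nat => 'a (only indices < n matter);
  x_i is the basis vector; an element of C (x) C is a function nat => nat => 'a.
  A linear map C (x) C -> C is given by its structure constants
  f i j k = f_{ij}^k, i.e. f(x_i (x) x_j) = sum_k f_{ij}^k x_k.\<close>

definition alg_closed_field :: "'a::field itself \<Rightarrow> bool" where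
  "alg_closed_field _ \<longleftrightarrow> (\<forall>q :: 'a poly. 0 < degree q \<longrightarrow> (\<exists>z. poly q z = 0))"

definition bvec :: "nat \<Rightarrow> nat \<Rightarrow> 'a::field" where
  "bvec i = (\<lambda>k. if k = i then 1 else 0)"

definition bil :: "nat \<Rightarrow> (nat \<Rightarrow> nat \<Rightarrow> nat \<Rightarrow> 'a::field) \<Rightarrow> (nat \<Rightarrow> 'a) \<Rightarrow> (nat \<Rightarrow> 'a) \<Rightarrow> nat \<Rightarrow> 'a" where
  "bil n f u w = (\<lambda>k. if k < n then (\<Sum>i<n. \<Sum>j<n. u i * w j * f i j k) else 0)"

definition tens :: "(nat \<Rightarrow> 'a::field) \<Rightarrow> (nat \<Rightarrow> 'a) \<Rightarrow> nat \<Rightarrow> nat \<Rightarrow> 'a" where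
  "tens u w = (\<lambda>a b. u a * w b)"

text \<open>Comultiplication of C: Delta(x_k) = sum_{a+b=k} x_a (x) x_b.\<close>
definition comul :: "nat \<Rightarrow> (nat \<Rightarrow> 'a::field) \<Rightarrow> nat \<Rightarrow> nat \<Rightarrow> 'a" where
  "comul n u = (\<lambda>a b. if a < n \<and> b < n \<and> a + b < n then u (a + b) else 0)"

definition counit :: "(nat \<Rightarrow> 'a::field) \<Rightarrow> 'a" where
  "counit u = u 0"

text \<open>f : C (x) C -> C is a coalgebra morphism, where C (x) C carries the tensor
  product coalgebra structure:
  Delta(x_i (x) x_j) = sum_{a+b=i} sum_{c+d=j} (x_a (x) x_c) (x) (x_b (x) x_d),
  eps(x_i (x) x_j) = eps(x_i) eps(x_j).\<close>
definition coalg_morph :: "nat \<Rightarrow> (nat \<Rightarrow> nat \<Rightarrow> nat \<Rightarrow> 'a::field) \<Rightarrow> bool" where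
  "coalg_morph n f \<longleftrightarrow>
     (\<forall>i<n. \<forall>j<n. comul n (bil n f (bvec i) (bvec j)) =
        (\<Sum>a\<le>i. \<Sum>c\<le>j. tens (bil n f (bvec a) (bvec c)) (bil n f (bvec (i - a)) (bvec (j - c)))))
   \<and> (\<forall>i<n. \<forall>j<n. counit (bil n f (bvec i) (bvec j)) = counit (bvec i :: nat \<Rightarrow> 'a) * counit (bvec j :: nat \<Rightarrow> 'a))"

text \<open>Regular q-magma coalgebra; all identities checked on basis elements a = x_i, b = x_j,
  with Delta(x_j) = sum_{s+t=j} x_s (x) x_t and eps(x_j) = [j = 0].
  Here p is a.b, d is a:b, lu is a^b, ld is a_b.\<close>
definition regular_qmagma :: "nat \<Rightarrow> (nat \<Rightarrow> nat \<Rightarrow> nat \<Rightarrow> 'a::field) \<Rightarrow> (nat \<Rightarrow> nat \<Rightarrow> nat \<Rightarrow> 'a) \<Rightarrow> bool" where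
  "regular_qmagma n p d \<longleftrightarrow> coalg_morph n p \<and> coalg_morph n d \<and>
    (\<exists>lu ld. coalg_morph n lu \<and> coalg_morph n ld \<and>
      (\<forall>i<n. \<forall>j<n.
         (\<Sum>s\<le>j. bil n p (bil n lu (bvec i) (bvec s)) (bvec (j - s))) = (if j = 0 then bvec i else 0)
       \<and> (\<Sum>s\<le>j. bil n lu (bil n p (bvec i) (bvec s)) (bvec (j - s))) = (if j = 0 then bvec i else 0)
       \<and> (\<Sum>s\<le>j. bil n ld (bil n d (bvec i) (bvec (j - s))) (bvec s)) = (if j = 0 then bvec i else 0)
       \<and> (\<Sum>s\<le>j. bil n d (bil n ld (bvec i) (bvec (j - s))) (bvec s)) = (if j = 0 then bvec i else 0)))"

text \<open>Regular q-cycle coalgebra: identities (1)-(3) on basis elements a = x_i, b = x_j, c = x_l.\<close>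
definition regular_qcycle :: "nat \<Rightarrow> (nat \<Rightarrow> nat \<Rightarrow> nat \<Rightarrow> 'a::field) \<Rightarrow> (nat \<Rightarrow> nat \<Rightarrow> nat \<Rightarrow> 'a) \<Rightarrow> bool" where
  "regular_qcycle n p d \<longleftrightarrow> regular_qmagma n p d \<and>
    (\<forall>i<n. \<forall>j<n. \<forall>l<n.
       (\<Sum>s\<le>j. bil n p (bil n p (bvec i) (bvec s)) (bil n d (bvec l) (bvec (j - s))))
         = (\<Sum>s\<le>l. bil n p (bil n p (bvec i) (bvec (l - s))) (bil n p (bvec j) (bvec s)))
     \<and> (\<Sum>s\<le>j. bil n d (bil n p (bvec i) (bvec s)) (bil n p (bvec l) (bvec (j - s))))
         = (\<Sum>s\<le>l. bil n p (bil n d (bvec i) (bvec (l - s))) (bil n d (bvec j) (bvec s)))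
     \<and> (\<Sum>s\<le>j. bil n d (bil n d (bvec i) (bvec s)) (bil n d (bvec l) (bvec (j - s))))
         = (\<Sum>s\<le>l. bil n d (bil n d (bvec i) (bvec (l - s))) (bil n p (bvec j) (bvec s))))"

end

theory Submission
  imports Defs
begin

lemma sum_fun_app: "(\<Sum>x\<in>A. F x) y = (\<Sum>x\<in>A. F x y)"
  by (induction A rule: infinite_finite_induct) auto

lemma ifmul: "(if P then 1 else 0) * (x::'a::field) = (if P then x else 0)"
  "x * (if P then 1 else 0) = (if P then x else 0)"
  "(if P then x else 0) * y = (if P then x * y else 0)" by simp_all

lemma bil_bvec:
  assumes "i < n" "j < n"
  shows "bil n f (bvec i) (bvec j) k = (if k < n then f i j k else (0::'a::field))"
proof -
  have "(\<Sum>i'<n. \<Sum>j'<n. bvec i i' * bvec j j' * f i' j' k) = f i j k"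
    using assms by (simp add: bvec_def ifmul sum.delta cong: if_cong)
  then show ?thesis by (simp add: bil_def)
qed

lemma cm_expand:
  fixes f :: "nat \<Rightarrow> nat \<Rightarrow> nat \<Rightarrow> 'a::field"
  assumes "coalg_morph n f" "i < n" "j < n" "a < n" "b < n"
  shows "(if a + b < n then f i j (a + b) else 0) = (\<Sum>a'\<le>i. \<Sum>c'\<le>j. f a' c' a * f (i - a') (j - c') b)"
proof -
  have "comul n (bil n f (bvec i) (bvec j)) =
        (\<Sum>a\<le>i. \<Sum>c\<le>j. tens (bil n f (bvec a) (bvec c)) (bil n f (bvec (i - a)) (bvec (j - c))))"
    using assms unfolding coalg_morph_def by blast
  then have "comul n (bil n f (bvec i) (bvec j)) a b =
        (\<Sum>a\<le>i. \<Sum>c\<le>j. tens (bil n f (bvec a) (bvec c)) (bil n f (bvec (i - a)) (bvec (j - c)))) a b"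
    by simp
  also have "\<dots> = (\<Sum>a'\<le>i. \<Sum>c'\<le>j. f a' c' a * f (i - a') (j - c') b)"
    using assms by (auto simp: sum_fun_app tens_def bil_bvec intro!: sum.cong)
  moreover have "comul n (bil n f (bvec i) (bvec j)) a b = (if a + b < n then f i j (a + b) else 0)"
    using assms by (simp add: comul_def bil_bvec)
  ultimately show ?thesis by simp
qed

lemma cu:
  fixes f :: "nat \<Rightarrow> nat \<Rightarrow> nat \<Rightarrow> 'a::field"
  assumes "coalg_morph n f" "i < n" "j < n"
  shows "f i j 0 = (if i = 0 \<and> j = 0 then 1 else 0)"
proof -
  have "counit (bil n f (bvec i) (bvec j)) = counit (bvec i :: nat \<Rightarrow> 'a) * counit (bvec j :: nat \<Rightarrow> 'a)"
    using assms unfolding coalg_morph_def by blast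
  moreover have "bil n f (bvec i) (bvec j) 0 = f i j 0" using assms by (simp add: bil_bvec)
  ultimately have "f i j 0 = (if i = 0 then 1 else 0) * (if j = 0 then 1 else 0)"
    by (simp add: counit_def bvec_def)
  then show ?thesis by simp
qed

lemma step:
  fixes f :: "nat \<Rightarrow> nat \<Rightarrow> nat \<Rightarrow> 'a::field"
  assumes "coalg_morph n f" "1 \<le> k" "k < n" "i < n" "j < n"
  shows "f i j k = (\<Sum>a'\<le>i. \<Sum>c'\<le>j. f a' c' 1 * f (i - a') (j - c') (k - 1))"
  using cm_expand[OF assms(1,4,5), of 1 "k - 1"] assms by simp

lemma L0:
  fixes f :: "nat \<Rightarrow> nat \<Rightarrow> nat \<Rightarrow> 'a::field"
  assumes "coalg_morph n f" "2 \<le> n"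
  shows "f 0 0 1 = 0"
proof -
  have pw: "f 0 0 k = f 0 0 1 ^ k" if "k < n" for k
    using that
  proof (induction k)
    case 0 then show ?case using cu[OF assms(1)] by simp
  next
    case (Suc k)
    then show ?case using step[OF assms(1), of "Suc k" 0 0] by simp
  qed
  obtain m where m: "n = Suc m" using assms(2) by (cases n) auto
  have "(0::'a) = f 0 0 1 * f 0 0 m"
    using cm_expand[OF assms(1), of 0 0 1 m] assms m by simp
  also have "\<dots> = f 0 0 1 ^ Suc m" using pw[of m] m by simp
  finally show ?thesis by auto
qed

lemma weight:
  fixes f :: "nat \<Rightarrow> nat \<Rightarrow> nat \<Rightarrow> 'a::field"
  assumes cm: "coalg_morph n f"
    and h1: "\<And>i j. i < n \<Longrightarrow> j < n \<Longrightarrow> A*i + B*j < C \<Longrightarrow> f i j 1 = 0"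
  shows "k < n \<Longrightarrow> i < n \<Longrightarrow> j < n \<Longrightarrow> A*i + B*j < C*k \<Longrightarrow> f i j k = 0"
proof (induction k arbitrary: i j)
  case 0 then show ?case by simp
next
  case (Suc k)
  show ?case
  proof (cases "k = 0")
    case True then show ?thesis using Suc h1 by simp
  next
    case False
    have "f i j (Suc k) = (\<Sum>a'\<le>i. \<Sum>c'\<le>j. f a' c' 1 * f (i - a') (j - c') k)"
      using step[OF cm, of "Suc k" i j] Suc by simp
    also have "\<dots> = 0"
    proof (rule sum.neutral, rule ballI)
      fix a' assume a': "a' \<in> {..i}"
      show "(\<Sum>c'\<le>j. f a' c' 1 * f (i - a') (j - c') k) = 0"
      proof (rule sum.neutral, rule ballI)
        fix c' assume c': "c' \<in> {..j}"
        show "f a' c' 1 * f (i - a') (j - c') k = 0"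
        proof (cases "A*a' + B*c' < C")
          case True then show ?thesis using h1[of a' c'] a' c' Suc by simp
        next
          case False
          have e1: "A*(i-a') = A*i - A*a'" "B*(j-c') = B*j - B*c'" by (simp_all add: diff_mult_distrib2)
          have l1: "A*a' \<le> A*i" "B*c' \<le> B*j" using a' c' by simp_all
          have "A*(i-a') + B*(j-c') < C*k" using False Suc.prems(4) e1 l1 by (simp only: mult_Suc_right)
          then show ?thesis using Suc.IH[of "i - a'" "j - c'"] Suc.prems by simp
        qed
      qed
    qed
    finally show ?thesis .
  qed
qed


lemma sum_one:
  assumes "finite A" "x \<in> A" "\<And>y. y \<in> A \<Longrightarrow> y \<noteq> x \<Longrightarrow> g y = 0"
  shows "sum g A = g x"
proof -
  have "sum g A = g x + sum g (A - {x})" using assms by (simp add: sum.remove)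
  also have "sum g (A - {x}) = 0" using assms by (intro sum.neutral) auto
  finally show ?thesis by simp
qed

lemma sum_two:
  assumes "finite A" "x \<in> A" "y \<in> A" "x \<noteq> y" "\<And>z. z \<in> A \<Longrightarrow> z \<noteq> x \<Longrightarrow> z \<noteq> y \<Longrightarrow> g z = 0"
  shows "sum g A = g x + g y"
proof -
  have "sum g A = g x + sum g (A - {x})" using assms by (simp add: sum.remove)
  also have "sum g (A - {x}) = g y"
    using assms by (intro sum_one) auto
  finally show ?thesis .
qed

lemma w11:
  fixes f :: "nat \<Rightarrow> nat \<Rightarrow> nat \<Rightarrow> 'a::field"
  assumes "coalg_morph n f" "2 \<le> n" "k < n" "i < n" "j < n" "i + j < k"
  shows "f i j k = 0"
proof -
  have h: "f i j 1 = 0" if "i < n" "j < n" "1*i + 1*j < 1" for i j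
    using that L0[OF assms(1,2)] by simp
  show ?thesis using weight[where A=1 and B=1 and C=1, OF assms(1) h, of k i j] assms by simp
qed

lemma w212:
  fixes f :: "nat \<Rightarrow> nat \<Rightarrow> nat \<Rightarrow> 'a::field"
  assumes "coalg_morph n f" "2 \<le> n" "f 0 1 1 = 0" "k < n" "i < n" "j < n" "2*i + j < 2*k"
  shows "f i j k = 0"
proof -
  have h: "f i j 1 = 0" if "i < n" "j < n" "2*i + 1*j < 2" for i j
  proof -
    have "i = 0" "j = 0 \<or> j = 1" using that by auto
    then show ?thesis using L0[OF assms(1,2)] assms(3) by auto
  qed
  show ?thesis using weight[where A=2 and B=1 and C=2, OF assms(1) h, of k i j] assms by simp
qed

lemma B0:
  fixes f :: "nat \<Rightarrow> nat \<Rightarrow> nat \<Rightarrow> 'a::field"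
  assumes cm: "coalg_morph n f" and n2: "2 \<le> n"
  shows "k < n \<Longrightarrow> f 0 k k = f 0 1 1 ^ k"
proof (induction k)
  case 0 then show ?case using cu[OF cm] by simp
next
  case (Suc k)
  have "f 0 (Suc k) (Suc k) = (\<Sum>c'\<le>Suc k. f 0 c' 1 * f 0 (Suc k - c') k)"
    using step[OF cm, of "Suc k" 0 "Suc k"] Suc by simp
  also have "\<dots> = f 0 1 1 * f 0 k k"
  proof (subst sum_one[where x=1])
    fix c' assume c': "c' \<in> {..Suc k}" "c' \<noteq> 1"
    show "f 0 c' 1 * f 0 (Suc k - c') k = 0"
    proof (cases "c' = 0")
      case True then show ?thesis using L0[OF cm n2] by simp
    next
      case False
      then have "f 0 (Suc k - c') k = 0" using w11[OF cm n2, of k 0 "Suc k - c'"] c' Suc by auto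
      then show ?thesis by simp
    qed
  qed auto
  finally show ?case using Suc by simp
qed

lemma A0:
  fixes f :: "nat \<Rightarrow> nat \<Rightarrow> nat \<Rightarrow> 'a::field"
  assumes cm: "coalg_morph n f" and n2: "2 \<le> n"
  shows "k < n \<Longrightarrow> f k 0 k = f 1 0 1 ^ k"
proof (induction k)
  case 0 then show ?case using cu[OF cm] by simp
next
  case (Suc k)
  have "f (Suc k) 0 (Suc k) = (\<Sum>a'\<le>Suc k. f a' 0 1 * f (Suc k - a') 0 k)"
    using step[OF cm, of "Suc k" "Suc k" 0] Suc by simp
  also have "\<dots> = f 1 0 1 * f k 0 k"
  proof (subst sum_one[where x=1])
    fix c' assume c': "c' \<in> {..Suc k}" "c' \<noteq> 1"
    show "f c' 0 1 * f (Suc k - c') 0 k = 0"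
    proof (cases "c' = 0")
      case True then show ?thesis using L0[OF cm n2] by simp
    next
      case False
      then have "f (Suc k - c') 0 k = 0" using w11[OF cm n2, of k "Suc k - c'" 0] c' Suc by auto
      then show ?thesis by simp
    qed
  qed auto
  finally show ?case using Suc by simp
qed


lemma atMost_one: "{..(1::nat)} = {0, 1}" by auto

lemma SB:
  fixes f :: "nat \<Rightarrow> nat \<Rightarrow> nat \<Rightarrow> 'a::field"
  assumes cm: "coalg_morph n f" and n2: "2 \<le> n" and kn: "Suc k < n"
    and hB1: "f 1 k (Suc k) = of_nat (Suc k) * f 1 0 1 * f 0 1 1 ^ k"
  shows "(\<Sum>a'\<le>1. \<Sum>c'\<le>Suc k. f a' c' 1 * f (1 - a') (Suc k - c') (Suc k))
     = of_nat (Suc (Suc k)) * f 1 0 1 * f 0 1 1 ^ Suc k"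
proof -
  have T0: "(\<Sum>c'\<le>Suc k. f 0 c' 1 * f 1 (Suc k - c') (Suc k)) = f 0 1 1 * f 1 k (Suc k)"
  proof (subst sum_one[where x=1])
    fix c' assume c': "c' \<in> {..Suc k}" "c' \<noteq> 1"
    show "f 0 c' 1 * f 1 (Suc k - c') (Suc k) = 0"
    proof (cases "c' = 0")
      case True then show ?thesis using L0[OF cm n2] by simp
    next
      case False
      then have "f 1 (Suc k - c') (Suc k) = 0" using w11[OF cm n2, of "Suc k" 1 "Suc k - c'"] c' kn by auto
      then show ?thesis by simp
    qed
  qed auto
  have T1: "(\<Sum>c'\<le>Suc k. f 1 c' 1 * f 0 (Suc k - c') (Suc k)) = f 1 0 1 * f 0 (Suc k) (Suc k)"
  proof (subst sum_one[where x=0])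
    fix c' assume c': "c' \<in> {..Suc k}" "c' \<noteq> 0"
    then have "f 0 (Suc k - c') (Suc k) = 0" using w11[OF cm n2, of "Suc k" 0 "Suc k - c'"] c' kn by auto
    then show "f 1 c' 1 * f 0 (Suc k - c') (Suc k) = 0" by simp
  qed auto
  have "(\<Sum>a'\<le>1. \<Sum>c'\<le>Suc k. f a' c' 1 * f (1 - a') (Suc k - c') (Suc k))
      = (\<Sum>c'\<le>Suc k. f 0 c' 1 * f 1 (Suc k - c') (Suc k)) + (\<Sum>c'\<le>Suc k. f 1 c' 1 * f 0 (Suc k - c') (Suc k))"
    by (simp add: atMost_one)
  also have "\<dots> = f 0 1 1 * f 1 k (Suc k) + f 1 0 1 * f 0 1 1 ^ Suc k"
    using T0 T1 B0[OF cm n2 kn] by simp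
  also have "\<dots> = of_nat (Suc (Suc k)) * f 1 0 1 * f 0 1 1 ^ Suc k"
    using hB1 by (simp add: algebra_simps)
  finally show ?thesis .
qed

lemma B1:
  fixes f :: "nat \<Rightarrow> nat \<Rightarrow> nat \<Rightarrow> 'a::field"
  assumes cm: "coalg_morph n f" and n2: "2 \<le> n"
  shows "Suc k < n \<Longrightarrow> f 1 k (Suc k) = of_nat (Suc k) * f 1 0 1 * f 0 1 1 ^ k"
proof (induction k)
  case 0 then show ?case by simp
next
  case (Suc k)
  have "f 1 (Suc k) (Suc (Suc k)) = (\<Sum>a'\<le>1. \<Sum>c'\<le>Suc k. f a' c' 1 * f (1 - a') (Suc k - c') (Suc k))"
    using step[OF cm, of "Suc (Suc k)" 1 "Suc k"] Suc.prems by simp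
  also have "\<dots> = of_nat (Suc (Suc k)) * f 1 0 1 * f 0 1 1 ^ Suc k"
    using SB[OF cm n2] Suc by simp
  finally show ?case .
qed

lemma NIL:
  fixes f :: "nat \<Rightarrow> nat \<Rightarrow> nat \<Rightarrow> 'a::field_char_0"
  assumes cm: "coalg_morph n f" and n2: "2 \<le> n" and a: "f 1 0 1 \<noteq> 0"
  shows "f 0 1 1 = 0"
proof -
  obtain k where k: "n = Suc (Suc k)" using n2 by (metis add_2_eq_Suc le_Suc_ex)
  have "(0::'a) = (\<Sum>a'\<le>1. \<Sum>c'\<le>Suc k. f a' c' 1 * f (1 - a') (Suc k - c') (Suc k))"
    using cm_expand[OF cm, of 1 "Suc k" 1 "Suc k"] k by simp
  also have "\<dots> = of_nat (Suc (Suc k)) * f 1 0 1 * f 0 1 1 ^ Suc k"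
    using SB[OF cm n2] B1[OF cm n2, of k] k by simp
  finally have "f 0 1 1 = 0 \<or> f 0 1 1 = 0 \<and> 0 < k" using a by (simp del: of_nat_Suc)
  then show ?thesis by blast
qed


lemma GL:
  fixes f :: "nat \<Rightarrow> nat \<Rightarrow> nat \<Rightarrow> 'a::field"
  assumes cm: "coalg_morph n f" and n2: "2 \<le> n" and b: "f 0 1 1 = 0" and a1: "f 1 0 1 = 1"
  shows "Suc k < n \<Longrightarrow> f (Suc k) 1 (Suc k) = of_nat (Suc k) * f 1 1 1"
proof (induction k)
  case 0 then show ?case by simp
next
  case (Suc k)
  have diag: "f (Suc k) 0 (Suc k) = 1" using A0[OF cm n2, of "Suc k"] Suc.prems a1 by simp
  have "f (Suc (Suc k)) 1 (Suc (Suc k)) =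
    (\<Sum>a'\<le>Suc (Suc k). \<Sum>c'\<le>1. f a' c' 1 * f (Suc (Suc k) - a') (1 - c') (Suc k))"
    using step[OF cm, of "Suc (Suc k)" "Suc (Suc k)" 1] Suc.prems by simp
  also have "\<dots> = (\<Sum>a'\<le>Suc (Suc k). f a' 0 1 * f (Suc (Suc k) - a') 1 (Suc k)
                       + f a' 1 1 * f (Suc (Suc k) - a') 0 (Suc k))"
    by (simp add: atMost_one)
  also have "\<dots> = f 1 0 1 * f (Suc k) 1 (Suc k) + f 1 1 1 * f (Suc k) 0 (Suc k)"
  proof (subst sum_one[where x=1])
    fix a' assume a': "a' \<in> {..Suc (Suc k)}" "a' \<noteq> 1"
    show "f a' 0 1 * f (Suc (Suc k) - a') 1 (Suc k) + f a' 1 1 * f (Suc (Suc k) - a') 0 (Suc k) = 0"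
    proof (cases "a' = 0")
      case True then show ?thesis using L0[OF cm n2] b by simp
    next
      case False
      then have "f (Suc (Suc k) - a') 1 (Suc k) = 0"
        using w212[OF cm n2 b, of "Suc k" "Suc (Suc k) - a'" 1] a' Suc.prems by auto
      moreover have "f (Suc (Suc k) - a') 0 (Suc k) = 0"
        using w11[OF cm n2, of "Suc k" "Suc (Suc k) - a'" 0] a' Suc.prems False by auto
      ultimately show ?thesis by simp
    qed
  qed auto
  also have "\<dots> = of_nat (Suc (Suc k)) * f 1 1 1"
    using Suc a1 diag by (simp add: algebra_simps)
  finally show ?case .
qed

lemma SL:
  fixes f :: "nat \<Rightarrow> nat \<Rightarrow> nat \<Rightarrow> 'a::field"
  assumes cm: "coalg_morph n f" and n2: "2 \<le> n" and a1: "f 1 0 1 = 1"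
    and ih: "\<And>r. 2 \<le> r \<Longrightarrow> r < m \<Longrightarrow> r < n \<Longrightarrow> f r 0 1 = 0"
  shows "Suc k < n \<Longrightarrow> x < n \<Longrightarrow> x < m + k \<Longrightarrow> f x 0 (Suc k) = (if x = Suc k then 1 else 0)"
proof (induction k arbitrary: x)
  case 0
  then show ?case using L0[OF cm n2] a1 ih[of x] by (cases "x = 0"; cases "x = 1") auto
next
  case (Suc k)
  have "f x 0 (Suc (Suc k)) = (\<Sum>a'\<le>x. f a' 0 1 * f (x - a') 0 (Suc k))"
    using step[OF cm, of "Suc (Suc k)" x 0] Suc.prems by simp
  also have "\<dots> = (if x = Suc (Suc k) then 1 else 0)"
  proof (cases "x = 0")
    case True then show ?thesis using L0[OF cm n2] by simp
  next
    case False
    have "(\<Sum>a'\<le>x. f a' 0 1 * f (x - a') 0 (Suc k)) = f 1 0 1 * f (x - 1) 0 (Suc k)"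
    proof (subst sum_one[where x=1])
      fix a' assume a': "a' \<in> {..x}" "a' \<noteq> 1"
      show "f a' 0 1 * f (x - a') 0 (Suc k) = 0"
      proof (cases "a' = 0")
        case True then show ?thesis using L0[OF cm n2] by simp
      next
        case False
        show ?thesis
        proof (cases "a' < m")
          case True then show ?thesis using ih[of a'] a' False Suc.prems by simp
        next
          case f2: False
          then have "f (x - a') 0 (Suc k) = 0"
            using w11[OF cm n2, of "Suc k" "x - a'" 0] a' Suc.prems by auto
          then show ?thesis by simp
        qed
      qed
    qed (use False in auto)
    also have "\<dots> = (if x = Suc (Suc k) then 1 else 0)"
      using Suc.IH[of "x - 1"] Suc.prems False a1 by auto
    finally show ?thesis .
  qed
  finally show ?case .
qed


lemma lin:
  fixes p G :: "nat \<Rightarrow> nat \<Rightarrow> nat \<Rightarrow> 'a::field"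
  assumes cp: "coalg_morph n p" and cg: "coalg_morph n G" and n2: "2 \<le> n"
    and b: "p 0 1 1 = 0" and pi: "p 1 1 1 \<noteq> 0" and c: "G 1 0 1 \<noteq> 0"
    and eq: "(\<Sum>i<n. p 1 1 i * G i 0 1) = G 1 0 1 * (\<Sum>i<n. G 1 0 i * p i 1 1)"
  shows "G 1 0 1 = 1"
proof -
  have L: "(\<Sum>i<n. p 1 1 i * G i 0 1) = p 1 1 1 * G 1 0 1"
  proof (subst sum_one[where x=1])
    fix i assume i: "i \<in> {..<n}" "i \<noteq> 1"
    show "p 1 1 i * G i 0 1 = 0"
    proof (cases "i = 0")
      case True then show ?thesis using cu[OF cp, of 1 1] n2 by simp
    next
      case False
      then have "p 1 1 i = 0" using w212[OF cp n2 b, of i 1 1] i n2 by auto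
      then show ?thesis by simp
    qed
  qed (use n2 in auto)
  have R: "(\<Sum>i<n. G 1 0 i * p i 1 1) = G 1 0 1 * p 1 1 1"
  proof (subst sum_one[where x=1])
    fix i assume i: "i \<in> {..<n}" "i \<noteq> 1"
    show "G 1 0 i * p i 1 1 = 0"
    proof (cases "i = 0")
      case True then show ?thesis using cu[OF cg, of 1 0] n2 by simp
    next
      case False
      then have "G 1 0 i = 0" using w11[OF cg n2, of i 1 0] i n2 by auto
      then show ?thesis by simp
    qed
  qed (use n2 in auto)
  have "p 1 1 1 * G 1 0 1 = G 1 0 1 * (G 1 0 1 * p 1 1 1)" using eq unfolding L R .
  then have "(G 1 0 1 - 1) * (G 1 0 1 * p 1 1 1) = 0" by (simp add: algebra_simps)
  then have "G 1 0 1 - 1 = 0 \<or> G 1 0 1 * p 1 1 1 = 0" by (simp only: mult_eq_0_iff)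
  then show ?thesis using pi c by auto
qed

lemma core:
  fixes p G :: "nat \<Rightarrow> nat \<Rightarrow> nat \<Rightarrow> 'a::field_char_0"
  assumes cp: "coalg_morph n p" and cg: "coalg_morph n G" and n2: "2 \<le> n"
    and b: "p 0 1 1 = 0" and a1: "p 1 0 1 = 1" and g1: "G 1 0 1 = 1" and pi: "p 1 1 1 \<noteq> 0"
    and m: "2 \<le> m" "m < n"
    and ih: "\<And>r. 2 \<le> r \<Longrightarrow> r < m \<Longrightarrow> r < n \<Longrightarrow> G r 0 1 = 0"
    and eq: "(\<Sum>i<n. p m 1 i * G i 0 1) = (\<Sum>i<n. G m 0 i * p i 1 1)"
  shows "G m 0 1 = 0"
proof -
  obtain k where k: "m = Suc k" using m by (cases m) auto
  have pmm: "p m 1 m = of_nat m * p 1 1 1" using GL[OF cp n2 b a1, of k] k m by simp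
  have gmm: "G m 0 m = 1" using A0[OF cg n2 m(2)] g1 by simp
  have L: "(\<Sum>i<n. p m 1 i * G i 0 1) = p m 1 1 * G 1 0 1 + p m 1 m * G m 0 1"
  proof (rule sum_two)
    fix i assume i: "i \<in> {..<n}" "i \<noteq> 1" "i \<noteq> m"
    show "p m 1 i * G i 0 1 = 0"
    proof (cases "i = 0")
      case True then show ?thesis using cu[OF cp, of m 1] m by simp
    next
      case False
      show ?thesis
      proof (cases "i < m")
        case True then show ?thesis using ih[of i] i False by simp
      next
        case f2: False
        then have "p m 1 i = 0" using w212[OF cp n2 b, of i m 1] i m by auto
        then show ?thesis by simp
      qed
    qed
  qed (use m in auto)
  have R: "(\<Sum>i<n. G m 0 i * p i 1 1) = G m 0 1 * p 1 1 1 + G m 0 m * p m 1 1"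
  proof (rule sum_two)
    fix i assume i: "i \<in> {..<n}" "i \<noteq> 1" "i \<noteq> m"
    show "G m 0 i * p i 1 1 = 0"
    proof (cases "i = 0")
      case True then show ?thesis using cu[OF cg, of m 0] m by simp
    next
      case False
      show ?thesis
      proof (cases "i < m")
        case True
        obtain j where j: "i = Suc j" using False by (cases i) auto
        have "G m 0 (Suc j) = (if m = Suc j then 1 else 0)"
          using SL[OF cg n2 g1 ih, where k=j and x=m] i j m True False by simp
        then show ?thesis using j i by simp
      next
        case f2: False
        then have "G m 0 i = 0" using w11[OF cg n2, of i m 0] i m by auto
        then show ?thesis by simp
      qed
    qed
  qed (use m in auto)
  have "p m 1 1 + of_nat m * p 1 1 1 * G m 0 1 = G m 0 1 * p 1 1 1 + p m 1 1"
    using eq L R pmm gmm g1 by simp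
  then have "(of_nat m - 1) * p 1 1 1 * G m 0 1 = 0" by (simp add: algebra_simps)
  moreover have "(of_nat m - 1 :: 'a) \<noteq> 0" using m by simp
  ultimately show ?thesis using pi by simp
qed


lemma bil_coord: "i < n \<Longrightarrow> j < n \<Longrightarrow> k < n \<Longrightarrow> bil n f (bvec i) (bvec j) k = (f i j k :: 'a::field)"
  by (simp add: bil_bvec)

lemma bil_delta:
  fixes f :: "nat \<Rightarrow> nat \<Rightarrow> nat \<Rightarrow> 'a::field"
  assumes "t < n" "k < n" "\<And>j. j < n \<Longrightarrow> w j = (if j = t then c else 0)"
  shows "bil n f u w k = c * (\<Sum>i<n. u i * f i t k)"
proof -
  have "bil n f u w k = (\<Sum>i<n. \<Sum>j<n. u i * w j * f i j k)" using assms by (simp add: bil_def)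
  also have "\<dots> = (\<Sum>i<n. c * (u i * f i t k))"
  proof (rule sum.cong)
    fix i assume "i \<in> {..<n}"
    have "(\<Sum>j<n. u i * w j * f i j k) = u i * w t * f i t k"
      using assms by (intro sum_one) auto
    then show "(\<Sum>j<n. u i * w j * f i j k) = c * (u i * f i t k)" using assms by simp
  qed simp
  also have "\<dots> = c * (\<Sum>i<n. u i * f i t k)" by (simp add: sum_distrib_left)
  finally show ?thesis .
qed

lemma sum_u:
  fixes g :: "nat \<Rightarrow> 'a::field"
  assumes "\<And>i. i < n \<Longrightarrow> u i = v i"
  shows "(\<Sum>i<n. u i * g i) = (\<Sum>i<n. v i * g i)"
  using assms by (intro sum.cong) auto

lemma unitlin:
  fixes f g :: "nat \<Rightarrow> nat \<Rightarrow> nat \<Rightarrow> 'a::field"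
  assumes cf: "coalg_morph n f" and n2: "2 \<le> n"
    and h: "bil n g (bil n f (bvec 1) (bvec 0)) (bvec 0) 1 = 1"
  shows "f 1 0 1 \<noteq> 0"
proof -
  have "bil n g (bil n f (bvec 1) (bvec 0)) (bvec 0) 1 = 1 * (\<Sum>i<n. bil n f (bvec 1) (bvec 0) i * g i 0 1)"
    using n2 by (intro bil_delta) (auto simp: bvec_def)
  also have "\<dots> = (\<Sum>i<n. f 1 0 i * g i 0 1)"
    using n2 by (simp add: bil_coord cong: sum_u)
  also have "\<dots> = f 1 0 1 * g 1 0 1"
  proof (rule sum_one)
    fix i assume i: "i \<in> {..<n}" "i \<noteq> 1"
    show "f 1 0 i * g i 0 1 = 0"
    proof (cases "i = 0")
      case True then show ?thesis using cu[OF cf, of 1 0] n2 by simp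
    next
      case False
      then have "f 1 0 i = 0" using w11[OF cf n2, of i 1 0] i n2 by auto
      then show ?thesis by simp
    qed
  qed (use n2 in auto)
  finally show ?thesis using h by auto
qed

lemma eqform:
  fixes p G D :: "nat \<Rightarrow> nat \<Rightarrow> nat \<Rightarrow> 'a::field"
  assumes cp: "coalg_morph n p" and cg: "coalg_morph n G" and cd: "coalg_morph n D" and n2: "2 \<le> n"
    and dz: "D 0 1 1 = 0" and m: "m < n"
    and h: "(\<Sum>s\<le>1. bil n G (bil n p (bvec m) (bvec s)) (bil n D (bvec 0) (bvec (1 - s))))
          = (\<Sum>s\<le>0. bil n p (bil n G (bvec m) (bvec (0 - s))) (bil n G (bvec 1) (bvec s)))"
  shows "(\<Sum>i<n. p m 1 i * G i 0 1) = G 1 0 1 * (\<Sum>i<n. G m 0 i * p i 1 1)"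
proof -
  have n1: "1 < n" "0 < n" using n2 by auto
  have h1: "bil n G (bil n p (bvec m) (bvec 0)) (bil n D (bvec 0) (bvec 1)) 1
          + bil n G (bil n p (bvec m) (bvec 1)) (bil n D (bvec 0) (bvec 0)) 1
          = bil n p (bil n G (bvec m) (bvec 0)) (bil n G (bvec 1) (bvec 0)) 1"
    using fun_cong[OF h, of 1] by (simp add: atMost_one sum_fun_app)
  have wD1: "bil n D (bvec 0) (bvec 1) j = (if j = 0 then 0 else 0)" if "j < n" for j
  proof -
    have "D 0 1 j = 0"
    proof (cases "j \<le> 1")
      case True then show ?thesis using cu[OF cd, of 0 1] dz n1 by (cases j) auto
    next
      case False then show ?thesis using w11[OF cd n2, of j 0 1] that n1 by auto
    qed
    then show ?thesis using that n1 by (simp add: bil_coord)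
  qed
  have wD0: "bil n D (bvec 0) (bvec 0) j = (if j = 0 then 1 else 0)" if "j < n" for j
  proof -
    have "D 0 0 j = (if j = 0 then 1 else 0)"
    proof (cases "j = 0")
      case True then show ?thesis using cu[OF cd, of 0 0] n1 by simp
    next
      case False then show ?thesis using w11[OF cd n2, of j 0 0] that n1 by auto
    qed
    then show ?thesis using that n1 by (simp add: bil_coord)
  qed
  have wG1: "bil n G (bvec 1) (bvec 0) j = (if j = 1 then G 1 0 1 else 0)" if "j < n" for j
  proof -
    have "G 1 0 j = (if j = 1 then G 1 0 1 else 0)"
    proof (cases "j = 0")
      case True then show ?thesis using cu[OF cg, of 1 0] n1 by simp
    next
      case False then show ?thesis using w11[OF cg n2, of j 1 0] that n1 by auto
    qed
    then show ?thesis using that n1 by (simp add: bil_coord)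
  qed
  have t1: "bil n G (bil n p (bvec m) (bvec 0)) (bil n D (bvec 0) (bvec 1)) 1 = 0"
    using bil_delta[of 0 n 1 "bil n D (bvec 0) (bvec 1)" 0 G] wD1 n1 by simp
  have t2: "bil n G (bil n p (bvec m) (bvec 1)) (bil n D (bvec 0) (bvec 0)) 1 = (\<Sum>i<n. p m 1 i * G i 0 1)"
  proof -
    have "bil n G (bil n p (bvec m) (bvec 1)) (bil n D (bvec 0) (bvec 0)) 1
        = 1 * (\<Sum>i<n. bil n p (bvec m) (bvec 1) i * G i 0 1)"
      using wD0 n1 by (intro bil_delta) auto
    also have "\<dots> = (\<Sum>i<n. p m 1 i * G i 0 1)"
      using n1 m by (simp add: bil_coord cong: sum_u)
    finally show ?thesis .
  qed
  have t3: "bil n p (bil n G (bvec m) (bvec 0)) (bil n G (bvec 1) (bvec 0)) 1 = G 1 0 1 * (\<Sum>i<n. G m 0 i * p i 1 1)"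
  proof -
    have "bil n p (bil n G (bvec m) (bvec 0)) (bil n G (bvec 1) (bvec 0)) 1
        = G 1 0 1 * (\<Sum>i<n. bil n G (bvec m) (bvec 0) i * p i 1 1)"
      using wG1 n1 by (intro bil_delta) auto
    also have "\<dots> = G 1 0 1 * (\<Sum>i<n. G m 0 i * p i 1 1)"
      using n1 m by (simp add: bil_coord cong: sum_u)
    finally show ?thesis .
  qed
  show ?thesis using h1 t1 t2 t3 by simp
qed


theorem proposition4p1:
  fixes n :: nat and p d :: "nat \<Rightarrow> nat \<Rightarrow> nat \<Rightarrow> 'a::field_char_0"
  assumes "alg_closed_field TYPE('a)"
    and "n \<ge> 2"
    and "regular_qcycle n p d"
    and "p 1 1 1 \<noteq> 0"
  shows "\<forall>i e. 0 < e \<and> i + e \<le> n - 1 \<longrightarrow> d (i + e) 0 i = 0 \<and> p (i + e) 0 i = 0"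
proof -
  have n2: "2 \<le> n" using assms(2) .
  have pi: "p 1 1 1 \<noteq> 0" using assms(4) .
  have n1: "1 < n" "0 < n" using n2 by auto
  have qm: "regular_qmagma n p d" and cyc: "\<forall>i<n. \<forall>j<n. \<forall>l<n.
       (\<Sum>s\<le>j. bil n p (bil n p (bvec i) (bvec s)) (bil n d (bvec l) (bvec (j - s))))
         = (\<Sum>s\<le>l. bil n p (bil n p (bvec i) (bvec (l - s))) (bil n p (bvec j) (bvec s)))
     \<and> (\<Sum>s\<le>j. bil n d (bil n p (bvec i) (bvec s)) (bil n p (bvec l) (bvec (j - s))))
         = (\<Sum>s\<le>l. bil n p (bil n d (bvec i) (bvec (l - s))) (bil n d (bvec j) (bvec s)))
     \<and> (\<Sum>s\<le>j. bil n d (bil n d (bvec i) (bvec s)) (bil n d (bvec l) (bvec (j - s))))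
         = (\<Sum>s\<le>l. bil n d (bil n d (bvec i) (bvec (l - s))) (bil n p (bvec j) (bvec s)))"
    using assms(3) unfolding regular_qcycle_def by blast+
  have cp: "coalg_morph n p" and cd: "coalg_morph n d" using qm unfolding regular_qmagma_def by blast+
  obtain lu ld where reg: "\<forall>i<n. \<forall>j<n.
         (\<Sum>s\<le>j. bil n p (bil n lu (bvec i) (bvec s)) (bvec (j - s))) = (if j = 0 then bvec i else 0)
       \<and> (\<Sum>s\<le>j. bil n lu (bil n p (bvec i) (bvec s)) (bvec (j - s))) = (if j = 0 then bvec i else 0)
       \<and> (\<Sum>s\<le>j. bil n ld (bil n d (bvec i) (bvec (j - s))) (bvec s)) = (if j = 0 then bvec i else 0)
       \<and> (\<Sum>s\<le>j. bil n d (bil n ld (bvec i) (bvec (j - s))) (bvec s)) = (if j = 0 then bvec i else 0)"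
    using qm unfolding regular_qmagma_def by blast
  have r2: "bil n lu (bil n p (bvec 1) (bvec 0)) (bvec 0) = bvec 1"
    using reg n1 by fastforce
  have r3: "bil n ld (bil n d (bvec 1) (bvec 0)) (bvec 0) = bvec 1"
    using reg n1 by fastforce
  have a0: "p 1 0 1 \<noteq> 0"
    using unitlin[OF cp n2, of lu] fun_cong[OF r2, of 1] by (simp add: bvec_def)
  have g0: "d 1 0 1 \<noteq> 0"
    using unitlin[OF cd n2, of ld] fun_cong[OF r3, of 1] by (simp add: bvec_def)
  have b0: "p 0 1 1 = 0" using NIL[OF cp n2 a0] .
  have d0: "d 0 1 1 = 0" using NIL[OF cd n2 g0] .
  have EQ1: "(\<Sum>i<n. p m 1 i * p i 0 1) = p 1 0 1 * (\<Sum>i<n. p m 0 i * p i 1 1)" if m: "m < n" for m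
  proof -
    have "(\<Sum>s\<le>1. bil n p (bil n p (bvec m) (bvec s)) (bil n d (bvec 0) (bvec (1 - s))))
          = (\<Sum>s\<le>0. bil n p (bil n p (bvec m) (bvec (0 - s))) (bil n p (bvec 1) (bvec s)))"
      using cyc m n1 by blast
    then show ?thesis using eqform[OF cp cp cd n2 d0 m] by blast
  qed
  have EQ2: "(\<Sum>i<n. p m 1 i * d i 0 1) = d 1 0 1 * (\<Sum>i<n. d m 0 i * p i 1 1)" if m: "m < n" for m
  proof -
    have "(\<Sum>s\<le>1. bil n d (bil n p (bvec m) (bvec s)) (bil n p (bvec 0) (bvec (1 - s))))
          = (\<Sum>s\<le>0. bil n p (bil n d (bvec m) (bvec (0 - s))) (bil n d (bvec 1) (bvec s)))"
      using cyc m n1 by blast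
    then show ?thesis using eqform[OF cp cd cp n2 b0 m] by blast
  qed
  have a1: "p 1 0 1 = 1" using lin[OF cp cp n2 b0 pi a0 EQ1[OF n1(1)]] .
  have g1: "d 1 0 1 = 1" using lin[OF cp cd n2 b0 pi g0 EQ2[OF n1(1)]] .
  have pall: "2 \<le> m \<longrightarrow> m < n \<longrightarrow> p m 0 1 = 0" for m
  proof (induction m rule: less_induct)
    case (less m)
    show ?case
    proof (intro impI)
      assume m: "2 \<le> m" "m < n"
      show "p m 0 1 = 0"
        using core[OF cp cp n2 b0 a1 a1 pi m] less EQ1[OF m(2)] a1 by simp
    qed
  qed
  have dall: "2 \<le> m \<longrightarrow> m < n \<longrightarrow> d m 0 1 = 0" for m
  proof (induction m rule: less_induct)
    case (less m)
    show ?case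
    proof (intro impI)
      assume m: "2 \<le> m" "m < n"
      show "d m 0 1 = 0"
        using core[OF cp cd n2 b0 a1 g1 pi m] less EQ2[OF m(2)] g1 by simp
    qed
  qed
  show ?thesis
  proof (intro allI impI)
    fix i e :: nat assume ie: "0 < e \<and> i + e \<le> n - 1"
    show "d (i + e) 0 i = 0 \<and> p (i + e) 0 i = 0"
    proof (cases i)
      case 0 then show ?thesis using cu[OF cd, of e 0] cu[OF cp, of e 0] ie n1 by auto
    next
      case (Suc k)
      have ien: "i + e < n" using ie n1 by linarith
      have "p (i + e) 0 (Suc k) = (if i + e = Suc k then 1 else 0)"
        using SL[OF cp n2 a1, where m=n and k=k and x="i+e"] pall ie ien Suc n1 by simp
      moreover have "d (i + e) 0 (Suc k) = (if i + e = Suc k then 1 else 0)"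
        using SL[OF cd n2 g1, where m=n and k=k and x="i+e"] dall ie ien Suc n1 by simp
      ultimately show ?thesis using Suc ie by simp
    qed
  qed
qed

end
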